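(* Let $p\in[1,\infty)$. If $$\lim_{|x|\to\infty}\int_{-\infty}^{\infty}G(x,t)\,dt=0,$$ then the operator $G:L_p(\mathbb R)\to L_p(\mathbb R)$, $f\mapsto Gf$, is compact.
   Context: Let $q:\mathbb R\to\mathbb R$ be measurable with $q\in L_1^{\mathrm{loc}}(\mathbb R)$ and $q(x)\ge1$ a.e. A principal fundamental system of solutions (PFSS) of $z''=q(x)z$ is a pair $u,v$ of solutions ($C^1$, derivative locally absolutely continuous, equation a.e.) such that for all $x$: $u>0$, $v>0$, $u'<0$, $v'>0$, $v'u-u'v=1$, $u(x)=v(x)\int_x^\infty v(t)^{-2}dt$, and $u,u'\to0$ as $x\to\infty$, $v,v'\to0$ as $x\to-\infty$, $v,v'\to\infty$ as $x\to\infty$, $u,|u'|\to\infty$ as $x\to-\infty$. Fix a PFSS $\{u,v\}$. The Green function is $G(x,t)=u(x)v(t)$ for $x\ge t$ and $G(x,t)=u(t)v(x)$ for $x\le t$, and $(Gf)(x)=\int_{-\infty}^\infty G(x,t)f(t)\,dt$. *)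

theory Defs
  imports "HOL-Analysis.Analysis"
begin

definition admissible_potential :: "(real \<Rightarrow> real) \<Rightarrow> bool" where
  "admissible_potential q \<longleftrightarrow>
     q \<in> borel_measurable lborel \<and>
     (\<forall>a b. set_integrable lborel {a..b} q) \<and>
     (AE x in lborel. q x \<ge> 1)"

text \<open>Solution of z'' = q z: z is C^1 and z' is locally absolutely continuous with
  z'' = q z a.e., written out as z'(x) = z'(a) + integral from a to x of q z.\<close>
definition is_solution :: "(real \<Rightarrow> real) \<Rightarrow> (real \<Rightarrow> real) \<Rightarrow> bool" where
  "is_solution q z \<longleftrightarrow>
     (\<forall>x. (z has_real_derivative deriv z x) (at x)) \<and>
     continuous_on UNIV (deriv z) \<and>
     (\<forall>a b. set_integrable lborel {a..b} (\<lambda>t. q t * z t)) \<and>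
     (\<forall>a x. deriv z x = deriv z a + (LBINT t=a..x. q t * z t))"

definition PFSS :: "(real \<Rightarrow> real) \<Rightarrow> (real \<Rightarrow> real) \<Rightarrow> (real \<Rightarrow> real) \<Rightarrow> bool" where
  "PFSS q u v \<longleftrightarrow>
     is_solution q u \<and> is_solution q v \<and>
     (\<forall>x. u x > 0 \<and> v x > 0 \<and> deriv u x < 0 \<and> deriv v x > 0 \<and>
          deriv v x * u x - deriv u x * v x = 1 \<and>
          set_integrable lborel {x..} (\<lambda>t. 1 / (v t)\<^sup>2) \<and>
          u x = v x * (LBINT t:{x..}. 1 / (v t)\<^sup>2)) \<and>
     (u \<longlongrightarrow> 0) at_top \<and> (deriv u \<longlongrightarrow> 0) at_top \<and>
     (v \<longlongrightarrow> 0) at_bot \<and> (deriv v \<longlongrightarrow> 0) at_bot \<and>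
     filterlim v at_top at_top \<and> filterlim (deriv v) at_top at_top \<and>
     filterlim u at_top at_bot \<and> filterlim (\<lambda>x. \<bar>deriv u x\<bar>) at_top at_bot"

definition green :: "(real \<Rightarrow> real) \<Rightarrow> (real \<Rightarrow> real) \<Rightarrow> real \<Rightarrow> real \<Rightarrow> real" where
  "green u v x t = (if t \<le> x then u x * v t else u t * v x)"

definition green_op :: "(real \<Rightarrow> real) \<Rightarrow> (real \<Rightarrow> real) \<Rightarrow> (real \<Rightarrow> real) \<Rightarrow> real \<Rightarrow> real" where
  "green_op u v f x = (LINT t|lborel. green u v x t * f t)"

definition in_Lp :: "real \<Rightarrow> (real \<Rightarrow> real) \<Rightarrow> bool" where
  "in_Lp p f \<longleftrightarrow> f \<in> borel_measurable lborel \<and> integrable lborel (\<lambda>x. \<bar>f x\<bar> powr p)"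

definition Lp_norm :: "real \<Rightarrow> (real \<Rightarrow> real) \<Rightarrow> real" where
  "Lp_norm p f = (LINT x|lborel. \<bar>f x\<bar> powr p) powr (1 / p)"

definition compact_green_Lp :: "real \<Rightarrow> (real \<Rightarrow> real) \<Rightarrow> (real \<Rightarrow> real) \<Rightarrow> bool" where
  "compact_green_Lp p u v \<longleftrightarrow>
     (\<forall>f. in_Lp p f \<longrightarrow>
        (\<forall>x. integrable lborel (\<lambda>t. green u v x t * f t)) \<and> in_Lp p (green_op u v f)) \<and>
     (\<forall>F :: nat \<Rightarrow> real \<Rightarrow> real. (\<forall>n. in_Lp p (F n)) \<and> (\<exists>B. \<forall>n. Lp_norm p (F n) \<le> B) \<longrightarrow>
        (\<exists>r g. strict_mono r \<and> in_Lp p g \<and>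
           (\<lambda>n. Lp_norm p (\<lambda>x. green_op u v (F (r n)) x - g x)) \<longlonglongrightarrow> 0))"

end

theory Submission
  imports Defs "HOL-Library.Diagonal_Subsequence"
begin


lemma young_aux:
  fixes a c p :: real
  assumes "a \<ge> 0" "c > 0" "p \<ge> 1"
  shows "a \<le> a powr p * c powr (1 - p) / p + (1 - 1 / p) * c"
proof (cases "a = 0")
  case True
  then show ?thesis using assms by (simp add: field_simps)
next
  case False
  then have a: "a > 0" using assms by simp
  have p0: "p > 0" using assms by simp
  have "(a powr p * c powr (1 - p)) powr (1 / p) * c powr (1 - 1 / p) \<le> (1 / p) * (a powr p * c powr (1 - p)) + (1 - 1 / p) * c"
    using assms a by (intro Youngs_inequality_0) (auto simp: field_simps)
  moreover have "(a powr p * c powr (1 - p)) powr (1 / p) * c powr (1 - 1 / p) = a"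
  proof -
    have "(a powr p * c powr (1 - p)) powr (1 / p) = a * c powr ((1 - p) / p)"
      using a assms p0 by (simp add: powr_mult powr_powr)
    moreover have "c powr ((1 - p) / p) * c powr (1 - 1 / p) = 1"
    proof -
      have "(1 - p) / p + (1 - 1 / p) = 0" using p0 by (simp add: field_simps)
      then show ?thesis using assms by (simp add: powr_add[symmetric])
    qed
    ultimately show ?thesis by (simp add: mult.assoc)
  qed
  ultimately show ?thesis by simp
qed

lemma jensen_kernel:
  fixes K f :: "real \<Rightarrow> real" and p :: real
  assumes p: "p \<ge> 1" and K0: "\<And>t. K t \<ge> 0"
    and Km[measurable]: "K \<in> borel_measurable lborel" and fm[measurable]: "f \<in> borel_measurable lborel"
    and Kint: "(\<integral>\<^sup>+t. ennreal (K t) \<partial>lborel) \<le> 1"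
    and Kf: "integrable lborel (\<lambda>t. K t * \<bar>f t\<bar>)"
  shows "ennreal ((LINT t|lborel. K t * \<bar>f t\<bar>) powr p) \<le> (\<integral>\<^sup>+t. ennreal (K t * \<bar>f t\<bar> powr p) \<partial>lborel)"
proof -
  define A where "A = (LINT t|lborel. K t * \<bar>f t\<bar>)"
  have A0: "A \<ge> 0" unfolding A_def using K0 by (intro integral_nonneg_AE) auto
  have p0: "p > 0" using p by simp
  show ?thesis
  proof (cases "A = 0 \<or> (\<integral>\<^sup>+t. ennreal (K t * \<bar>f t\<bar> powr p) \<partial>lborel) = \<infinity>")
    case True
    then show ?thesis using p0 by (auto simp: A_def[symmetric])
  next
    case False
    then have Apos: "A > 0" and fin: "(\<integral>\<^sup>+t. ennreal (K t * \<bar>f t\<bar> powr p) \<partial>lborel) < \<infinity>"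
      using A0 by (auto simp: top.not_eq_extremum)
    have Kp_int: "integrable lborel (\<lambda>t. K t * \<bar>f t\<bar> powr p)"
      using fin K0 by (intro integrableI_bounded) auto
    have K_int: "integrable lborel K"
      using Kint K0 by (intro integrableI_bounded) (auto simp: order.strict_trans1)
    define S where "S = (LINT t|lborel. K t * \<bar>f t\<bar> powr p)"
    have Seq: "(\<integral>\<^sup>+t. ennreal (K t * \<bar>f t\<bar> powr p) \<partial>lborel) = ennreal S"
      unfolding S_def using Kp_int K0 by (intro nn_integral_eq_integral) auto
    have LK: "(LINT t|lborel. K t) \<le> 1"
    proof -
      have "ennreal (LINT t|lborel. K t) = (\<integral>\<^sup>+t. ennreal (K t) \<partial>lborel)"
        using K_int K0 by (intro nn_integral_eq_integral[symmetric]) auto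
      then show ?thesis using Kint by (metis ennreal_le_1)
    qed
    define c where "c = A powr (1 - p) / p"
    have pt: "K t * \<bar>f t\<bar> \<le> c * (K t * \<bar>f t\<bar> powr p) + (1 - 1 / p) * A * K t" for t
    proof -
      have "\<bar>f t\<bar> \<le> \<bar>f t\<bar> powr p * A powr (1 - p) / p + (1 - 1 / p) * A"
        using young_aux[of "\<bar>f t\<bar>" A p] Apos p by simp
      from mult_left_mono[OF this K0[of t]] show ?thesis
        by (simp add: c_def algebra_simps)
    qed
    have h: "(LINT t|lborel. K t * \<bar>f t\<bar>) \<le> (LINT t|lborel. c * (K t * \<bar>f t\<bar> powr p) + (1 - 1 / p) * A * K t)"
      using pt Kf Kp_int K_int by (intro integral_mono) auto
    have "A \<le> (LINT t|lborel. c * (K t * \<bar>f t\<bar> powr p) + (1 - 1 / p) * A * K t)"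
      using h by (simp only: A_def[symmetric])
    also have "\<dots> = c * S + (1 - 1 / p) * A * (LINT t|lborel. K t)"
      using Kp_int K_int by (simp add: S_def)
    also have "\<dots> \<le> c * S + (1 - 1 / p) * A"
    proof -
      have "(1 - 1 / p) * A \<ge> 0" using A0 p by (intro mult_nonneg_nonneg) (auto simp: field_simps)
      then show ?thesis using LK mult_left_mono[OF LK, of "(1 - 1 / p) * A"] by simp
    qed
    finally have "A \<le> c * S + (1 - 1 / p) * A" .
    then have "A / p \<le> c * S" by (simp add: field_simps)
    then have "A \<le> A powr (1 - p) * S" using p0 by (simp add: c_def field_simps)
    then have "A * A powr (p - 1) \<le> A powr (1 - p) * S * A powr (p - 1)"
      using Apos by (intro mult_right_mono) auto
    also have "\<dots> = S" using Apos by (simp add: mult.assoc mult.commute[of S] powr_add[symmetric])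
    finally have "A powr p \<le> S" using Apos by (simp add: powr_add[symmetric] powr_mult_base)
    then show ?thesis unfolding Seq A_def[symmetric] by (intro ennreal_leI)
  qed
qed

lemma int_Kf:
  fixes K f :: "real \<Rightarrow> real" and p c :: real
  assumes p: "p \<ge> 1" and Km[measurable]: "K \<in> borel_measurable lborel"
    and K0: "\<And>t. 0 \<le> K t" and Kc: "\<And>t. K t \<le> c" and Ki: "integrable lborel K"
    and f: "in_Lp p f"
  shows "integrable lborel (\<lambda>t. K t * f t)"
proof -
  have fm[measurable]: "f \<in> borel_measurable lborel" and fi: "integrable lborel (\<lambda>x. \<bar>f x\<bar> powr p)"
    using f unfolding in_Lp_def by auto
  have c0: "c \<ge> 0" using K0[of 0] Kc[of 0] by simp
  show ?thesis
  proof (rule Bochner_Integration.integrable_bound[where f="\<lambda>t. K t + c * \<bar>f t\<bar> powr p"])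
    show "integrable lborel (\<lambda>t. K t + c * \<bar>f t\<bar> powr p)" using Ki fi by auto
    show "(\<lambda>t. K t * f t) \<in> borel_measurable lborel" by measurable
    show "AE t in lborel. norm (K t * f t) \<le> norm (K t + c * \<bar>f t\<bar> powr p)"
    proof (intro AE_I2)
      fix t
      have "K t * \<bar>f t\<bar> \<le> K t + c * \<bar>f t\<bar> powr p"
      proof (cases "\<bar>f t\<bar> \<le> 1")
        case True
        then have "K t * \<bar>f t\<bar> \<le> K t" using K0[of t] by (simp add: mult_left_le)
        then show ?thesis using c0 by (simp add: add_increasing2)
      next
        case False
        then have "\<bar>f t\<bar> \<le> \<bar>f t\<bar> powr p" using powr_mono[of 1 p "\<bar>f t\<bar>"] p by simp
        then have "K t * \<bar>f t\<bar> \<le> c * \<bar>f t\<bar> powr p"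
          using K0[of t] Kc[of t] False by (intro mult_mono) auto
        then show ?thesis using K0[of t] by simp
      qed
      then show "norm (K t * f t) \<le> norm (K t + c * \<bar>f t\<bar> powr p)"
        using K0[of t] c0 by (simp add: abs_mult)
    qed
  qed
qed

lemma diag_conv:
  fixes h :: "nat \<Rightarrow> real \<Rightarrow> real" and M :: "real \<Rightarrow> real"
  assumes bdd: "\<And>n x. \<bar>h n x\<bar> \<le> M x"
  shows "\<exists>s. strict_mono s \<and> (\<forall>x\<in>\<rat>. convergent (\<lambda>k. h (s k) x))"
proof -
  obtain m :: "real \<Rightarrow> nat" where "bij_betw m \<rat> UNIV"
    using countable_rat Rats_infinite by (erule countableE_infinite)
  then obtain r :: "nat \<Rightarrow> real" where bij: "bij_betw r UNIV \<rat>"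
    using bij_betw_inv by blast
  let ?P = "\<lambda>n. \<lambda>s. convergent (\<lambda>k. h (s k) (r n))"
  interpret nat: subseqs ?P
  proof (unfold convergent_def, unfold subseqs_def, auto)
    fix n :: nat and s :: "nat \<Rightarrow> nat" assume s: "strict_mono s"
    have "bounded {-M (r n)..M (r n)}"
      using bounded_closed_interval by auto
    moreover have "\<And>k. h (s k) (r n) \<in> {-M (r n)..M (r n)}"
      using bdd by (simp add: abs_le_iff minus_le_iff)
    ultimately have "\<exists>l s'. strict_mono s' \<and> ((\<lambda>k. h (s k) (r n)) \<circ> s') \<longlonglongrightarrow> l"
      using compact_Icc compact_imp_seq_compact seq_compactE by metis
    thus "\<exists>s'. strict_mono (s'::nat\<Rightarrow>nat) \<and> (\<exists>l. (\<lambda>k. h (s (s' k)) (r n)) \<longlonglongrightarrow> l)"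
      by (auto simp: comp_def)
  qed
  define d where "d = nat.diagseq"
  have subseq: "strict_mono d"
    unfolding d_def using nat.subseq_diagseq by auto
  have rat_cnv: "?P n d" for n
  proof -
    have Pn_seqseq: "?P n (nat.seqseq (Suc n))"
      by (rule nat.seqseq_holds)
    have 1: "(\<lambda>k. h ((nat.seqseq (Suc n) \<circ> (\<lambda>k. nat.fold_reduce (Suc n) k
      (Suc n + k))) k) (r n)) = (\<lambda>k. h (nat.seqseq (Suc n) k) (r n)) \<circ>
      (\<lambda>k. nat.fold_reduce (Suc n) k (Suc n + k))"
      by auto
    have 2: "?P n (d \<circ> ((+) (Suc n)))"
      unfolding d_def nat.diagseq_seqseq 1
      by (intro convergent_subseq_convergent Pn_seqseq nat.subseq_diagonal_rest)
    then obtain L where 3: "(\<lambda>na. h (d (na + Suc n)) (r n)) \<longlonglongrightarrow> L"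
      by (auto simp: add.commute dest: convergentD)
    then have "(\<lambda>k. h (d k) (r n)) \<longlonglongrightarrow> L"
      by (rule LIMSEQ_offset)
    then show ?thesis
      by (auto simp: convergent_def)
  qed
  have "\<forall>x\<in>\<rat>. convergent (\<lambda>k. h (d k) x)"
  proof
    fix x :: real assume "x \<in> \<rat>"
    then obtain n where "x = r n" using bij unfolding bij_betw_def by auto
    then show "convergent (\<lambda>k. h (d k) x)" using rat_cnv[of n] by simp
  qed
  then show ?thesis using subseq by blast
qed

lemma conv_all:
  fixes g :: "nat \<Rightarrow> real \<Rightarrow> real"
  assumes conv: "\<forall>x\<in>\<rat>. convergent (\<lambda>k. g k x)"
    and equi: "\<And>\<epsilon>. \<epsilon> > 0 \<Longrightarrow> \<exists>\<delta>>0. \<forall>y. \<bar>y - x\<bar> < \<delta> \<longrightarrow> (\<forall>k. \<bar>g k y - g k x\<bar> < \<epsilon>)"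
  shows "convergent (\<lambda>k. g k x)"
proof -
  have "Cauchy (\<lambda>k. g k x)"
  proof (rule CauchyI)
    fix e :: real assume e: "0 < e"
    obtain \<delta> where \<delta>: "\<delta> > 0" "\<And>y k. \<bar>y - x\<bar> < \<delta> \<Longrightarrow> \<bar>g k y - g k x\<bar> < e / 3"
      using equi[of "e / 3"] e by auto
    obtain y where y: "y \<in> \<rat>" "x < y" "y < x + \<delta>" using Rats_dense_in_real[of x "x + \<delta>"] \<delta> by auto
    then have "Cauchy (\<lambda>k. g k y)" using conv convergent_Cauchy by blast
    then obtain M where M: "\<And>m n. m \<ge> M \<Longrightarrow> n \<ge> M \<Longrightarrow> \<bar>g m y - g n y\<bar> < e / 3"
      using CauchyD[of "\<lambda>k. g k y" "e / 3"] e by auto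
    have "\<forall>m\<ge>M. \<forall>n\<ge>M. \<bar>g m x - g n x\<bar> < e"
    proof (intro allI impI)
      fix m n assume "m \<ge> M" "n \<ge> M"
      have "\<bar>y - x\<bar> < \<delta>" using y by simp
      then have "\<bar>g m y - g m x\<bar> < e / 3" "\<bar>g n y - g n x\<bar> < e / 3" using \<delta> by auto
      moreover have "\<bar>g m y - g n y\<bar> < e / 3" using M \<open>m \<ge> M\<close> \<open>n \<ge> M\<close> by auto
      ultimately show "\<bar>g m x - g n x\<bar> < e" by linarith
    qed
    then show "\<exists>M. \<forall>m\<ge>M. \<forall>n\<ge>M. norm (g m x - g n x) < e" by auto
  qed
  then show ?thesis by (rule real_Cauchy_convergent)
qed

lemma powr_diff_bound:
  fixes a b p :: real
  assumes "p \<ge> 1"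
  shows "\<bar>a - b\<bar> powr p \<le> 2 powr p * (\<bar>a\<bar> powr p + \<bar>b\<bar> powr p)"
proof -
  define m where "m = max \<bar>a\<bar> \<bar>b\<bar>"
  have "\<bar>a - b\<bar> \<le> 2 * m" unfolding m_def by linarith
  then have "\<bar>a - b\<bar> powr p \<le> (2 * m) powr p" using assms by (intro powr_mono2) auto
  also have "\<dots> = 2 powr p * m powr p" unfolding m_def by (simp add: powr_mult)
  also have "m powr p \<le> \<bar>a\<bar> powr p + \<bar>b\<bar> powr p" unfolding m_def by (auto simp: max_def)
  then have "2 powr p * m powr p \<le> 2 powr p * (\<bar>a\<bar> powr p + \<bar>b\<bar> powr p)" by (intro mult_left_mono) auto
  finally show ?thesis .
qed

lemma powr_root_bound:
  fixes a b p :: real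
  assumes "a \<ge> 0" "p > 0" "a powr p \<le> b"
  shows "a \<le> b powr (1 / p)"
proof -
  have "a = (a powr p) powr (1 / p)" using assms by (simp add: powr_powr)
  also have "\<dots> \<le> b powr (1 / p)" using assms by (intro powr_mono2) auto
  finally show ?thesis .
qed



locale gctx =
  fixes q u v :: "real \<Rightarrow> real" and p :: real
  assumes adm: "admissible_potential q" and pf: "PFSS q u v" and p1: "p \<ge> 1"
    and hyp: "((\<lambda>x. LINT t|lborel. green u v x t) \<longlongrightarrow> 0) at_infinity"
begin

lemma solu: "is_solution q u" and solv: "is_solution q v"
  using pf unfolding PFSS_def by auto

lemma upos: "u x > 0" and vpos: "v x > 0" and du_neg: "deriv u x < 0" and dv_pos: "deriv v x > 0"
  and wr: "deriv v x * u x - deriv u x * v x = 1"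
  using pf unfolding PFSS_def by blast+

lemma upos0[simp]: "0 \<le> u x" and vpos0[simp]: "0 \<le> v x"
  using upos[of x] vpos[of x] by auto

lemma uder: "(u has_real_derivative deriv u x) (at x)" and vder: "(v has_real_derivative deriv v x) (at x)"
  using solu solv unfolding is_solution_def by auto

lemma isCont_u: "isCont u x" and isCont_v: "isCont v x"
  using uder vder DERIV_isCont by blast+

lemma cont_u: "continuous_on S u" and cont_v: "continuous_on S v"
  using isCont_u isCont_v by (simp_all add: continuous_at_imp_continuous_on)

lemma u_meas[measurable]: "u \<in> borel_measurable borel" and v_meas[measurable]: "v \<in> borel_measurable borel"
  using cont_u cont_v by (auto intro: borel_measurable_continuous_onI)

lemma v_mono: "x \<le> y \<Longrightarrow> v x \<le> v y"
proof -
  assume "x \<le> y"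
  show "v x \<le> v y"
  proof (cases "x = y")
    case False
    then have "x < y" using \<open>x \<le> y\<close> by simp
    then show ?thesis using DERIV_pos_imp_increasing[of x y v] vder dv_pos by (meson less_imp_le)
  qed simp
qed

lemma u_anti: "x \<le> y \<Longrightarrow> u y \<le> u x"
proof -
  assume "x \<le> y"
  show "u y \<le> u x"
  proof (cases "x = y")
    case False
    then have "x < y" using \<open>x \<le> y\<close> by simp
    then show ?thesis using DERIV_neg_imp_decreasing[of x y u] uder du_neg by (meson less_imp_le)
  qed simp
qed

lemma q_meas[measurable]: "q \<in> borel_measurable borel"
  using adm unfolding admissible_potential_def by (simp add: measurable_lborel1 )

lemma q_ge1: "AE x in lborel. q x \<ge> 1"
  using adm unfolding admissible_potential_def by auto

lemma nn_seg:
  assumes sol: "is_solution q z" and zpos: "\<And>x. z x > 0" and cz: "continuous_on UNIV z" and "a \<le> x"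
  shows "(\<integral>\<^sup>+t. ennreal (z t) * indicator {a..x} t \<partial>lborel) \<le> ennreal (deriv z x - deriv z a)"
proof -
  have zm[measurable]: "z \<in> borel_measurable borel" using cz by (auto intro: borel_measurable_continuous_onI)
  have si: "set_integrable lborel {a..x} (\<lambda>t. q t * z t)" using sol unfolding is_solution_def by auto
  have eq: "deriv z x - deriv z a = (LBINT t:{a..x}. q t * z t)"
  proof -
    have "deriv z x = deriv z a + (LBINT t=a..x. q t * z t)" using sol unfolding is_solution_def by blast
    then show ?thesis using \<open>a \<le> x\<close> by (simp add: interval_integral_Icc)
  qed
  have "(\<integral>\<^sup>+t. ennreal (z t) * indicator {a..x} t \<partial>lborel) \<le> (\<integral>\<^sup>+t. ennreal (indicator {a..x} t * (q t * z t)) \<partial>lborel)"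
  proof (rule nn_integral_mono_AE)
    show "AE t in lborel. ennreal (z t) * indicator {a..x} t \<le> ennreal (indicator {a..x} t * (q t * z t))"
      using q_ge1
    proof eventually_elim
      case (elim t)
      have "z t \<le> q t * z t" using elim zpos[of t] by (simp add: mult_le_cancel_right1)
      then show ?case by (auto simp: indicator_def intro: ennreal_leI)
    qed
  qed
  also have "\<dots> = ennreal (LINT t|lborel. indicator {a..x} t * (q t * z t))"
  proof (rule nn_integral_eq_integral)
    show "integrable lborel (\<lambda>t. indicator {a..x} t * (q t * z t))"
      using si unfolding set_integrable_def by simp
    show "AE t in lborel. 0 \<le> indicator {a..x} t * (q t * z t)"
      using q_ge1 by eventually_elim (use zpos in \<open>auto simp: indicator_def intro!: mult_nonneg_nonneg less_imp_le[OF zpos]\<close>)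
  qed
  also have "\<dots> = ennreal (deriv z x - deriv z a)"
    unfolding eq set_lebesgue_integral_def by simp
  finally show ?thesis .
qed

lemma v_left: "(\<integral>\<^sup>+t. ennreal (v t) * indicator {..x} t \<partial>lborel) \<le> ennreal (deriv v x)"
proof -
  let ?f = "\<lambda>i t. ennreal (v t) * indicator {x - real i..x} t"
  have "(\<lambda>i. integral\<^sup>N lborel (?f i)) \<longlonglongrightarrow> (\<integral>\<^sup>+t. ennreal (v t) * indicator {..x} t \<partial>lborel)"
  proof (rule nn_integral_LIMSEQ)
    show "incseq ?f" by (auto simp: incseq_def le_fun_def split: split_indicator)
    show "\<And>i. ?f i \<in> borel_measurable lborel" by measurable
    fix t show "(\<lambda>i. ?f i t) \<longlonglongrightarrow> ennreal (v t) * indicator {..x} t"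
    proof (rule tendsto_eventually)
      show "eventually (\<lambda>i. ?f i t = ennreal (v t) * indicator {..x} t) sequentially"
        using eventually_ge_at_top[of "nat \<lceil>x - t\<rceil>"]
      proof eventually_elim
        case (elim i)
        have "real i \<ge> x - t" using elim real_nat_ceiling_ge[of "x - t"] of_nat_mono[OF elim] by linarith
        then show ?case by (auto split: split_indicator)
      qed
    qed
  qed
  moreover have "integral\<^sup>N lborel (?f i) \<le> ennreal (deriv v x)" for i
  proof -
    have "integral\<^sup>N lborel (?f i) \<le> ennreal (deriv v x - deriv v (x - real i))"
      using nn_seg[OF solv vpos cont_v, of "x - real i" x] by simp
    also have "\<dots> \<le> ennreal (deriv v x)" using dv_pos[of "x - real i"] by (intro ennreal_leI) simp
    finally show ?thesis .
  qed
  ultimately show ?thesis by (intro LIMSEQ_le_const2) auto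
qed

lemma u_right: "(\<integral>\<^sup>+t. ennreal (u t) * indicator {x..} t \<partial>lborel) \<le> ennreal (- deriv u x)"
proof -
  let ?f = "\<lambda>i t. ennreal (u t) * indicator {x..x + real i} t"
  have "(\<lambda>i. integral\<^sup>N lborel (?f i)) \<longlonglongrightarrow> (\<integral>\<^sup>+t. ennreal (u t) * indicator {x..} t \<partial>lborel)"
  proof (rule nn_integral_LIMSEQ)
    show "incseq ?f" by (auto simp: incseq_def le_fun_def split: split_indicator)
    show "\<And>i. ?f i \<in> borel_measurable lborel" by measurable
    fix t show "(\<lambda>i. ?f i t) \<longlonglongrightarrow> ennreal (u t) * indicator {x..} t"
    proof (rule tendsto_eventually)
      show "eventually (\<lambda>i. ?f i t = ennreal (u t) * indicator {x..} t) sequentially"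
        using eventually_ge_at_top[of "nat \<lceil>t - x\<rceil>"]
      proof eventually_elim
        case (elim i)
        have "real i \<ge> t - x" using elim real_nat_ceiling_ge[of "t - x"] of_nat_mono[OF elim] by linarith
        then show ?case by (auto split: split_indicator)
      qed
    qed
  qed
  moreover have "integral\<^sup>N lborel (?f i) \<le> ennreal (- deriv u x)" for i
  proof -
    have "integral\<^sup>N lborel (?f i) \<le> ennreal (deriv u (x + real i) - deriv u x)"
      using nn_seg[OF solu upos cont_u, of x "x + real i"] by simp
    also have "\<dots> \<le> ennreal (- deriv u x)" using du_neg[of "x + real i"] by (intro ennreal_leI) simp
    finally show ?thesis .
  qed
  ultimately show ?thesis by (intro LIMSEQ_le_const2) auto
qed

lemma G_sym: "green u v x t = green u v t x"
  by (auto simp: green_def)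

lemma G_pos: "green u v x t > 0"
  using upos vpos by (auto simp: green_def)

lemma G_le: "green u v x t \<le> u x * v x"
  using upos vpos v_mono[of t x] u_anti[of x t]
  by (auto simp: green_def intro: mult_left_mono mult_right_mono)

lemma G_meas[measurable]: "(\<lambda>(x, t). green u v x t) \<in> borel_measurable (lborel \<Otimes>\<^sub>M lborel)"
  unfolding green_def by measurable

lemma G_meas1[measurable]: "green u v x \<in> borel_measurable lborel"
  unfolding green_def by measurable

lemma G_meas2[measurable]: "(\<lambda>x. green u v x t) \<in> borel_measurable lborel"
  unfolding green_def by measurable

lemma G_int1: "(\<integral>\<^sup>+t. ennreal (green u v x t) \<partial>lborel) \<le> 1"
proof -
  have "(\<integral>\<^sup>+t. ennreal (green u v x t) \<partial>lborel) \<le>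
     (\<integral>\<^sup>+t. ennreal (u x) * (ennreal (v t) * indicator {..x} t) + ennreal (v x) * (ennreal (u t) * indicator {x..} t) \<partial>lborel)"
    using upos vpos by (intro nn_integral_mono) (auto simp: green_def ennreal_mult less_imp_le mult.commute split: split_indicator intro: add_increasing2 add_increasing)
  also have "\<dots> = ennreal (u x) * (\<integral>\<^sup>+t. ennreal (v t) * indicator {..x} t \<partial>lborel) + ennreal (v x) * (\<integral>\<^sup>+t. ennreal (u t) * indicator {x..} t \<partial>lborel)"
    by (simp add: nn_integral_add nn_integral_cmult)
  also have "\<dots> \<le> ennreal (u x) * ennreal (deriv v x) + ennreal (v x) * ennreal (- deriv u x)"
    by (intro add_mono mult_left_mono v_left u_right) auto
  also have "\<dots> = ennreal (deriv v x * u x - deriv u x * v x)"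
    using upos[of x] vpos[of x] dv_pos[of x] du_neg[of x]
    by (simp add: ennreal_mult[symmetric] algebra_simps, subst ennreal_plus[symmetric]) (auto simp: mult_pos_neg mult_nonneg_nonpos)
  also have "\<dots> = 1" using wr by simp
  finally show ?thesis .
qed

lemma G_integrable: "integrable lborel (green u v x)"
proof (rule integrableI_bounded)
  show "(\<integral>\<^sup>+t. ennreal (norm (green u v x t)) \<partial>lborel) < \<infinity>"
    using G_int1[of x] G_pos[of x] by (simp add: abs_of_pos order.strict_trans1)
qed simp

lemma G_nn_eq: "(\<integral>\<^sup>+t. ennreal (green u v x t) \<partial>lborel) = ennreal (LINT t|lborel. green u v x t)"
  using G_integrable[of x] G_pos[of x] by (intro nn_integral_eq_integral) (auto intro: less_imp_le)

lemma tail: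
  assumes "\<epsilon> > 0"
  shows "\<exists>N\<ge>0. \<forall>t. (\<integral>\<^sup>+x. ennreal (green u v x t) * indicator {x. N < \<bar>x\<bar>} x \<partial>lborel) \<le> ennreal \<epsilon>"
proof -
  have "eventually (\<lambda>t. dist (LINT x|lborel. green u v t x) 0 < \<epsilon>) at_infinity"
    using tendstoD[OF hyp assms] .
  then obtain M where M: "\<And>t. M \<le> norm t \<Longrightarrow> dist (LINT x|lborel. green u v t x) 0 < \<epsilon>"
    unfolding eventually_at_infinity by blast
  define M' where "M' = max M 0"
  have M'0: "M' \<ge> 0" by (simp add: M'_def)
  have du0: "(deriv u \<longlongrightarrow> 0) at_top" and dv0: "(deriv v \<longlongrightarrow> 0) at_bot"
    using pf unfolding PFSS_def by blast+
  have e1: "\<epsilon> / (2 * v M') > 0" using vpos[of M'] assms by simp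
  have e2: "\<epsilon> / (2 * u (-M')) > 0" using upos[of "-M'"] assms by simp
  obtain N1 where N1: "\<And>y. y \<ge> N1 \<Longrightarrow> dist (deriv u y) 0 < \<epsilon> / (2 * v M')"
    using tendstoD[OF du0 e1] unfolding eventually_at_top_linorder by blast
  obtain N2 where N2: "\<And>y. y \<le> N2 \<Longrightarrow> dist (deriv v y) 0 < \<epsilon> / (2 * u (-M'))"
    using tendstoD[OF dv0 e2] unfolding eventually_at_bot_linorder by blast
  define N where "N = max M' (max N1 (- N2))"
  have NM: "N \<ge> M'" "N \<ge> N1" "-N \<le> N2" by (auto simp: N_def)
  have "(\<integral>\<^sup>+x. ennreal (green u v x t) * indicator {x. N < \<bar>x\<bar>} x \<partial>lborel) \<le> ennreal \<epsilon>" for t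
  proof (cases "M' \<le> \<bar>t\<bar>")
    case True
    have "(\<integral>\<^sup>+x. ennreal (green u v x t) * indicator {x. N < \<bar>x\<bar>} x \<partial>lborel) \<le> (\<integral>\<^sup>+x. ennreal (green u v t x) \<partial>lborel)"
      by (intro nn_integral_mono) (auto simp: G_sym[of _ t] split: split_indicator)
    also have "\<dots> = ennreal (LINT x|lborel. green u v t x)" by (rule G_nn_eq)
    also have "\<dots> \<le> ennreal \<epsilon>"
      using M[of t] True by (intro ennreal_leI) (auto simp: M'_def)
    finally show ?thesis .
  next
    case False
    have "(\<integral>\<^sup>+x. ennreal (green u v x t) * indicator {x. N < \<bar>x\<bar>} x \<partial>lborel) \<le>
      (\<integral>\<^sup>+x. ennreal (v M') * (ennreal (u x) * indicator {N..} x) + ennreal (u (-M')) * (ennreal (v x) * indicator {..-N} x) \<partial>lborel)"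
    proof (intro nn_integral_mono)
      fix x
      show "ennreal (green u v x t) * indicator {x. N < \<bar>x\<bar>} x \<le> ennreal (v M') * (ennreal (u x) * indicator {N..} x) + ennreal (u (-M')) * (ennreal (v x) * indicator {..-N} x)"
      proof (cases "N < \<bar>x\<bar>")
        case True
        show ?thesis
        proof (cases "x > N")
          case True
          then have "t \<le> x" using False NM by linarith
          then have "green u v x t = u x * v t" by (simp add: green_def)
          also have "\<dots> \<le> u x * v M'" using False upos[of x] v_mono[of t M'] by (intro mult_left_mono) auto
          finally have g: "green u v x t \<le> u x * v M'" .
          have "ennreal (green u v x t) \<le> ennreal (v M') * ennreal (u x)"
            using g by (simp add: ennreal_mult[symmetric] mult.commute ennreal_leI)
          then show ?thesis using True by (auto intro!: add_increasing2)
        next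
          case False
          then have "x < -N" using \<open>N < \<bar>x\<bar>\<close> by linarith
          then have "\<not> t \<le> x" using \<open>\<not> M' \<le> \<bar>t\<bar>\<close> NM by linarith
          then have "green u v x t = u t * v x" by (simp add: green_def)
          also have "\<dots> \<le> u (-M') * v x" using \<open>\<not> M' \<le> \<bar>t\<bar>\<close> vpos[of x] u_anti[of "-M'" t] by (intro mult_right_mono) auto
          finally have g: "green u v x t \<le> u (-M') * v x" .
          have "ennreal (green u v x t) \<le> ennreal (u (-M')) * ennreal (v x)"
            using g by (simp add: ennreal_mult[symmetric] mult.commute ennreal_leI)
          then show ?thesis using \<open>x < -N\<close> by (auto intro!: add_increasing)
        qed
      qed simp
    qed
    also have "\<dots> = ennreal (v M') * (\<integral>\<^sup>+x. ennreal (u x) * indicator {N..} x \<partial>lborel) + ennreal (u (-M')) * (\<integral>\<^sup>+x. ennreal (v x) * indicator {..-N} x \<partial>lborel)"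
      by (simp add: nn_integral_add nn_integral_cmult)
    also have "\<dots> \<le> ennreal (v M') * ennreal (- deriv u N) + ennreal (u (-M')) * ennreal (deriv v (-N))"
      by (intro add_mono mult_left_mono v_left u_right) auto
    also have "\<dots> = ennreal (v M' * (- deriv u N) + u (-M') * deriv v (-N))"
      using upos vpos du_neg[of N] dv_pos[of "-N"]
      by (simp add: ennreal_mult[symmetric] less_imp_le, subst ennreal_plus[symmetric]) (auto simp: mult_nonneg_nonpos less_imp_le)
    also have "\<dots> \<le> ennreal \<epsilon>"
    proof (intro ennreal_leI)
      have a: "- deriv u N < \<epsilon> / (2 * v M')" using N1[of N] NM du_neg[of N] by auto
      have b: "deriv v (-N) < \<epsilon> / (2 * u (-M'))" using N2[of "-N"] NM dv_pos[of "-N"] by auto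
      have "v M' * (- deriv u N) \<le> v M' * (\<epsilon> / (2 * v M'))" using a vpos[of M'] by (intro mult_left_mono) auto
      also have "\<dots> = \<epsilon> / 2" using vpos[of M'] by simp
      finally have a': "v M' * (- deriv u N) \<le> \<epsilon> / 2" .
      have "u (-M') * deriv v (-N) \<le> u (-M') * (\<epsilon> / (2 * u (-M')))" using b upos[of "-M'"] by (intro mult_left_mono) auto
      also have "\<dots> = \<epsilon> / 2" using upos[of "-M'"] by simp
      finally have b': "u (-M') * deriv v (-N) \<le> \<epsilon> / 2" .
      show "v M' * (- deriv u N) + u (-M') * deriv v (-N) \<le> \<epsilon>" using a' b' by linarith
    qed
    finally show ?thesis .
  qed
  then show ?thesis using NM M'0 by (intro exI[of _ N]) auto
qed

lemma G_meas_prod[measurable]: "(\<lambda>z. green u v (fst z) (snd z)) \<in> borel_measurable (lborel \<Otimes>\<^sub>M lborel)"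
  unfolding green_def by measurable

lemma Lp_meas: "in_Lp p f \<Longrightarrow> f \<in> borel_measurable lborel"
  and Lp_int: "in_Lp p f \<Longrightarrow> integrable lborel (\<lambda>x. \<bar>f x\<bar> powr p)"
  unfolding in_Lp_def by auto

lemma Lp_abs: "in_Lp p f \<Longrightarrow> in_Lp p (\<lambda>t. \<bar>f t\<bar>)"
  unfolding in_Lp_def by auto

lemma intG: "in_Lp p f \<Longrightarrow> integrable lborel (\<lambda>t. green u v x t * f t)"
  by (rule int_Kf[OF p1 G_meas1 _ G_le G_integrable]) (auto simp: less_imp_le G_pos)

lemma intG_abs: "in_Lp p f \<Longrightarrow> integrable lborel (\<lambda>t. green u v x t * \<bar>f t\<bar>)"
  by (rule intG[OF Lp_abs])

lemma pt_bound:
  assumes f: "in_Lp p f"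
  shows "ennreal (\<bar>green_op u v f x\<bar> powr p) \<le> (\<integral>\<^sup>+t. ennreal (green u v x t * \<bar>f t\<bar> powr p) \<partial>lborel)"
proof -
  have fm[measurable]: "f \<in> borel_measurable lborel" using Lp_meas[OF f] .
  have "\<bar>green_op u v f x\<bar> \<le> (LINT t|lborel. green u v x t * \<bar>f t\<bar>)"
    unfolding green_op_def using intG[OF f] intG_abs[OF f] G_pos
    by (intro integral_abs_bound_integral) (auto simp: abs_mult abs_of_pos)
  then have "\<bar>green_op u v f x\<bar> powr p \<le> (LINT t|lborel. green u v x t * \<bar>f t\<bar>) powr p"
    using p1 by (intro powr_mono2) auto
  then have "ennreal (\<bar>green_op u v f x\<bar> powr p) \<le> ennreal ((LINT t|lborel. green u v x t * \<bar>f t\<bar>) powr p)"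
    by (rule ennreal_leI)
  also have "\<dots> \<le> (\<integral>\<^sup>+t. ennreal (green u v x t * \<bar>f t\<bar> powr p) \<partial>lborel)"
    using G_pos by (intro jensen_kernel p1 G_int1 intG_abs f) (auto simp: less_imp_le)
  finally show ?thesis .
qed

lemma Gop_meas[measurable]:
  assumes f: "in_Lp p f"
  shows "green_op u v f \<in> borel_measurable lborel"
proof -
  have fm[measurable]: "f \<in> borel_measurable lborel" using Lp_meas[OF f] .
  show ?thesis unfolding green_op_def
    by (rule lborel.borel_measurable_lebesgue_integral) simp
qed

lemma set_bound:
  assumes f: "in_Lp p f" and S[measurable]: "S \<in> sets lborel"
    and eta: "\<And>t. (\<integral>\<^sup>+x. ennreal (green u v x t) * indicator S x \<partial>lborel) \<le> ennreal \<eta>"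
  shows "(\<integral>\<^sup>+x. ennreal (\<bar>green_op u v f x\<bar> powr p) * indicator S x \<partial>lborel) \<le> ennreal \<eta> * (\<integral>\<^sup>+t. ennreal (\<bar>f t\<bar> powr p) \<partial>lborel)"
proof -
  have fm[measurable]: "f \<in> borel_measurable lborel" using Lp_meas[OF f] .
  have "(\<integral>\<^sup>+x. ennreal (\<bar>green_op u v f x\<bar> powr p) * indicator S x \<partial>lborel) \<le>
        (\<integral>\<^sup>+x. (\<integral>\<^sup>+t. ennreal (green u v x t * \<bar>f t\<bar> powr p) \<partial>lborel) * indicator S x \<partial>lborel)"
    by (intro nn_integral_mono mult_right_mono pt_bound f) auto
  also have "\<dots> = (\<integral>\<^sup>+x. (\<integral>\<^sup>+t. ennreal (green u v x t * \<bar>f t\<bar> powr p) * indicator S x \<partial>lborel) \<partial>lborel)"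
    by (subst nn_integral_multc) auto
  also have "\<dots> = (\<integral>\<^sup>+t. (\<integral>\<^sup>+x. ennreal (green u v x t * \<bar>f t\<bar> powr p) * indicator S x \<partial>lborel) \<partial>lborel)"
    by (rule lborel_pair.Fubini'[symmetric]) measurable
  also have "\<dots> = (\<integral>\<^sup>+t. ennreal (\<bar>f t\<bar> powr p) * (\<integral>\<^sup>+x. ennreal (green u v x t) * indicator S x \<partial>lborel) \<partial>lborel)"
  proof (intro nn_integral_cong)
    fix t
    have "(\<integral>\<^sup>+x. ennreal (green u v x t * \<bar>f t\<bar> powr p) * indicator S x \<partial>lborel) =
          (\<integral>\<^sup>+x. ennreal (\<bar>f t\<bar> powr p) * (ennreal (green u v x t) * indicator S x) \<partial>lborel)"
      using G_pos by (intro nn_integral_cong) (auto simp: ennreal_mult less_imp_le mult.commute mult.left_commute)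
    also have "\<dots> = ennreal (\<bar>f t\<bar> powr p) * (\<integral>\<^sup>+x. ennreal (green u v x t) * indicator S x \<partial>lborel)"
      by (rule nn_integral_cmult) measurable
    finally show "(\<integral>\<^sup>+x. ennreal (green u v x t * \<bar>f t\<bar> powr p) * indicator S x \<partial>lborel) =
          ennreal (\<bar>f t\<bar> powr p) * (\<integral>\<^sup>+x. ennreal (green u v x t) * indicator S x \<partial>lborel)" .
  qed
  also have "\<dots> \<le> (\<integral>\<^sup>+t. ennreal (\<bar>f t\<bar> powr p) * ennreal \<eta> \<partial>lborel)"
    by (intro nn_integral_mono mult_left_mono eta) auto
  also have "\<dots> = ennreal \<eta> * (\<integral>\<^sup>+t. ennreal (\<bar>f t\<bar> powr p) \<partial>lborel)"
    by (subst nn_integral_multc) (auto simp: mult.commute)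
  finally show ?thesis .
qed

lemma G_col1: "(\<integral>\<^sup>+x. ennreal (green u v x t) * indicator UNIV x \<partial>lborel) \<le> ennreal 1"
  using G_int1[of t] by (simp add: G_sym[of _ t])

lemma Lp_nn: "in_Lp p f \<Longrightarrow> (\<integral>\<^sup>+t. ennreal (\<bar>f t\<bar> powr p) \<partial>lborel) = ennreal (LINT t|lborel. \<bar>f t\<bar> powr p)"
  by (intro nn_integral_eq_integral Lp_int) auto

lemma Gop_Lp:
  assumes f: "in_Lp p f"
  shows "in_Lp p (green_op u v f)"
  unfolding in_Lp_def
proof
  show "green_op u v f \<in> borel_measurable lborel" using f by measurable
  have "(\<integral>\<^sup>+x. ennreal (\<bar>green_op u v f x\<bar> powr p) * indicator UNIV x \<partial>lborel) \<le> ennreal 1 * (\<integral>\<^sup>+t. ennreal (\<bar>f t\<bar> powr p) \<partial>lborel)"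
    by (rule set_bound[OF f _ G_col1]) simp
  also have "\<dots> < \<infinity>" using Lp_nn[OF f] by simp
  finally show "integrable lborel (\<lambda>x. \<bar>green_op u v f x\<bar> powr p)"
    using f by (intro integrableI_bounded) auto
qed

lemma G_diff_aux:
  assumes "x \<le> y" "-N \<le> x" "y \<le> N"
  shows "\<bar>green u v y t - green u v x t\<bar> \<le> v N * \<bar>u x - u y\<bar> + u (-N) * \<bar>v x - v y\<bar>"
proof -
  have uxy: "u y \<le> u x" and vxy: "v x \<le> v y" using assms u_anti v_mono by auto
  have vN: "v y \<le> v N" and uN: "u x \<le> u (-N)" using assms u_anti v_mono by auto
  have t0: "0 \<le> v N * \<bar>u x - u y\<bar>" "0 \<le> u (-N) * \<bar>v x - v y\<bar>" by auto
  consider "t \<le> x" | "x < t \<and> t \<le> y" | "y < t" by linarith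
  then show ?thesis
  proof cases
    case 1
    then have "green u v y t - green u v x t = (u y - u x) * v t" using assms by (auto simp: green_def algebra_simps)
    moreover have "v t \<le> v N" using 1 assms v_mono by auto
    ultimately have "\<bar>green u v y t - green u v x t\<bar> = \<bar>u x - u y\<bar> * v t" by (simp add: abs_mult abs_minus_commute)
    also have "\<dots> \<le> \<bar>u x - u y\<bar> * v N" using \<open>v t \<le> v N\<close> by (intro mult_left_mono) auto
    also have "\<dots> = v N * \<bar>u x - u y\<bar>" by simp
    finally show ?thesis using t0 by linarith
  next
    case 2
    then have e: "green u v y t - green u v x t = u y * v t - u t * v x" by (auto simp: green_def)
    have ut: "u y \<le> u t" "u t \<le> u x" and vt: "v x \<le> v t" "v t \<le> v y" using 2 u_anti v_mono by auto
    have a1: "u y * v t \<le> u y * v y" using vt by (intro mult_left_mono) auto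
    have a2: "u y * v x \<le> u t * v x" using ut by (intro mult_right_mono) auto
    have a3: "u y * v x \<le> u y * v t" using vt by (intro mult_left_mono) auto
    have a4: "u t * v x \<le> u x * v x" using ut by (intro mult_right_mono) auto
    have b1: "u y * (v y - v x) \<le> u (-N) * \<bar>v x - v y\<bar>"
      using vxy uN uxy by (intro mult_mono) auto
    have b2: "(u x - u y) * v x \<le> v N * \<bar>u x - u y\<bar>"
      using vxy vN uxy by (subst mult.commute, intro mult_mono) auto
    have "u y * v t - u t * v x \<le> u y * (v y - v x)" using a1 a2 by (simp add: algebra_simps)
    moreover have "u y * v t - u t * v x \<ge> - ((u x - u y) * v x)" using a3 a4 by (simp add: algebra_simps)
    ultimately show ?thesis using e b1 b2 t0 by linarith
  next
    case 3
    then have "green u v y t - green u v x t = u t * (v y - v x)" using assms by (auto simp: green_def algebra_simps)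
    moreover have "u t \<le> u (-N)" using 3 assms u_anti by auto
    ultimately have "\<bar>green u v y t - green u v x t\<bar> = u t * \<bar>v x - v y\<bar>" by (simp add: abs_mult abs_minus_commute)
    also have "\<dots> \<le> u (-N) * \<bar>v x - v y\<bar>" using \<open>u t \<le> u (-N)\<close> by (intro mult_right_mono) auto
    finally show ?thesis using t0 by linarith
  qed
qed

lemma G_diff:
  assumes "x \<in> {-N..N}" "y \<in> {-N..N}"
  shows "\<bar>green u v y t - green u v x t\<bar> \<le> v N * \<bar>u x - u y\<bar> + u (-N) * \<bar>v x - v y\<bar>"
proof (cases "x \<le> y")
  case True
  then show ?thesis using G_diff_aux[of x y N t] assms by auto
next
  case False
  then show ?thesis using G_diff_aux[of y x N t] assms by (auto simp: abs_minus_commute)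
qed

lemma G_L1: "(LINT t|lborel. green u v x t) \<le> 1"
  using G_int1[of x] unfolding G_nn_eq by (metis ennreal_le_1)

lemma equi:
  assumes f: "in_Lp p f" and C: "(\<integral>\<^sup>+t. ennreal (\<bar>f t\<bar> powr p) \<partial>lborel) \<le> ennreal C" and C0: "C \<ge> 0"
    and xy: "x \<in> {-N..N}" "y \<in> {-N..N}"
  shows "\<bar>green_op u v f y - green_op u v f x\<bar> powr p \<le> 2 powr p * ((v N * \<bar>u x - u y\<bar> + u (-N) * \<bar>v x - v y\<bar>) * C)"
proof -
  have fm[measurable]: "f \<in> borel_measurable lborel" using Lp_meas[OF f] .
  define \<omega> where "\<omega> = v N * \<bar>u x - u y\<bar> + u (-N) * \<bar>v x - v y\<bar>"
  have \<omega>0: "\<omega> \<ge> 0" unfolding \<omega>_def by auto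
  define K where "K t = \<bar>green u v y t - green u v x t\<bar> / 2" for t
  have K0: "K t \<ge> 0" for t unfolding K_def by auto
  have Kb: "K t \<le> \<omega> / 2" for t unfolding K_def \<omega>_def using G_diff[OF xy, of t] by simp
  have Km[measurable]: "K \<in> borel_measurable lborel" unfolding K_def by measurable
  have Ki: "integrable lborel K" unfolding K_def using G_integrable by auto
  have LK: "(LINT t|lborel. K t) \<le> 1"
  proof -
    have "(LINT t|lborel. K t) \<le> (LINT t|lborel. (green u v y t + green u v x t) / 2)"
      using Ki G_integrable G_pos unfolding K_def by (intro integral_mono) (auto simp: abs_le_iff less_imp_le)
    also have "\<dots> = ((LINT t|lborel. green u v y t) + (LINT t|lborel. green u v x t)) / 2"
      using G_integrable by simp
    also have "\<dots> \<le> 1" using G_L1[of x] G_L1[of y] by simp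
    finally show ?thesis .
  qed
  have Kint: "(\<integral>\<^sup>+t. ennreal (K t) \<partial>lborel) \<le> 1"
  proof -
    have "(\<integral>\<^sup>+t. ennreal (K t) \<partial>lborel) = ennreal (LINT t|lborel. K t)"
      using Ki K0 by (intro nn_integral_eq_integral) auto
    then show ?thesis using LK by (simp add: ennreal_le_1)
  qed
  have Kf: "integrable lborel (\<lambda>t. K t * \<bar>f t\<bar>)"
    using int_Kf[OF p1 Km K0 Kb Ki Lp_abs[OF f]] .
  define A where "A = (LINT t|lborel. K t * \<bar>f t\<bar>)"
  have A0: "A \<ge> 0" unfolding A_def using K0 by (intro integral_nonneg_AE) auto
  have "green_op u v f y - green_op u v f x = (LINT t|lborel. (green u v y t - green u v x t) * f t)"
    unfolding green_op_def using intG[OF f] by (simp add: left_diff_distrib)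
  moreover have "\<bar>LINT t|lborel. (green u v y t - green u v x t) * f t\<bar> \<le> (LINT t|lborel. 2 * (K t * \<bar>f t\<bar>))"
  proof (rule integral_abs_bound_integral)
    show "integrable lborel (\<lambda>t. (green u v y t - green u v x t) * f t)"
      using intG[OF f, of y] intG[OF f, of x] by (simp add: left_diff_distrib)
    show "integrable lborel (\<lambda>t. 2 * (K t * \<bar>f t\<bar>))" using Kf by simp
    show "\<bar>(green u v y t - green u v x t) * f t\<bar> \<le> 2 * (K t * \<bar>f t\<bar>)" for t
      by (simp add: K_def abs_mult)
  qed
  ultimately have "\<bar>green_op u v f y - green_op u v f x\<bar> \<le> (LINT t|lborel. 2 * (K t * \<bar>f t\<bar>))"
    by simp
  also have "\<dots> = 2 * A" unfolding A_def by simp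
  finally have d: "\<bar>green_op u v f y - green_op u v f x\<bar> \<le> 2 * A" .
  have "ennreal (A powr p) \<le> (\<integral>\<^sup>+t. ennreal (K t * \<bar>f t\<bar> powr p) \<partial>lborel)"
    unfolding A_def by (rule jensen_kernel[OF p1 K0 Km fm Kint Kf])
  also have "\<dots> \<le> (\<integral>\<^sup>+t. ennreal (\<omega> / 2) * ennreal (\<bar>f t\<bar> powr p) \<partial>lborel)"
  proof (intro nn_integral_mono)
    fix t
    have "K t * \<bar>f t\<bar> powr p \<le> \<omega> / 2 * \<bar>f t\<bar> powr p" using Kb[of t] by (intro mult_right_mono) auto
    then show "ennreal (K t * \<bar>f t\<bar> powr p) \<le> ennreal (\<omega> / 2) * ennreal (\<bar>f t\<bar> powr p)"
      using \<omega>0 by (simp add: ennreal_mult[symmetric] ennreal_leI)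
  qed
  also have "\<dots> = ennreal (\<omega> / 2) * (\<integral>\<^sup>+t. ennreal (\<bar>f t\<bar> powr p) \<partial>lborel)"
    by (rule nn_integral_cmult) measurable
  also have "\<dots> \<le> ennreal (\<omega> / 2) * ennreal C" using C by (intro mult_left_mono) auto
  also have "\<dots> = ennreal (\<omega> / 2 * C)" using \<omega>0 C0 by (subst ennreal_mult) auto
  finally have "A powr p \<le> \<omega> / 2 * C" using \<omega>0 C0 by (simp add: ennreal_le_iff)
  also have "\<dots> \<le> \<omega> * C" using \<omega>0 C0 by (simp add: mult_right_mono)
  finally have Ap: "A powr p \<le> \<omega> * C" .
  have "\<bar>green_op u v f y - green_op u v f x\<bar> powr p \<le> (2 * A) powr p"
    using d p1 by (intro powr_mono2) auto
  also have "\<dots> = 2 powr p * A powr p" using A0 by (simp add: powr_mult)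
  also have "\<dots> \<le> 2 powr p * (\<omega> * C)" using Ap by (intro mult_left_mono) auto
  finally show ?thesis unfolding \<omega>_def .
qed

lemma Hbound:
  assumes f: "in_Lp p f" and C: "(\<integral>\<^sup>+t. ennreal (\<bar>f t\<bar> powr p) \<partial>lborel) \<le> ennreal C" and C0: "C \<ge> 0"
  shows "\<bar>green_op u v f x\<bar> powr p \<le> u x * v x * C"
proof -
  have fm[measurable]: "f \<in> borel_measurable lborel" using Lp_meas[OF f] .
  have "ennreal (\<bar>green_op u v f x\<bar> powr p) \<le> (\<integral>\<^sup>+t. ennreal (green u v x t * \<bar>f t\<bar> powr p) \<partial>lborel)"
    by (rule pt_bound[OF f])
  also have "\<dots> \<le> (\<integral>\<^sup>+t. ennreal (u x * v x) * ennreal (\<bar>f t\<bar> powr p) \<partial>lborel)"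
  proof (intro nn_integral_mono)
    fix t
    have "green u v x t * \<bar>f t\<bar> powr p \<le> u x * v x * \<bar>f t\<bar> powr p" using G_le by (intro mult_right_mono) auto
    then show "ennreal (green u v x t * \<bar>f t\<bar> powr p) \<le> ennreal (u x * v x) * ennreal (\<bar>f t\<bar> powr p)"
      by (simp add: ennreal_mult[symmetric] ennreal_leI)
  qed
  also have "\<dots> = ennreal (u x * v x) * (\<integral>\<^sup>+t. ennreal (\<bar>f t\<bar> powr p) \<partial>lborel)"
    by (rule nn_integral_cmult) measurable
  also have "\<dots> \<le> ennreal (u x * v x) * ennreal C" using C by (intro mult_left_mono) auto
  also have "\<dots> = ennreal (u x * v x * C)" using C0 by (subst ennreal_mult) auto
  finally show ?thesis using C0 by (simp add: ennreal_le_iff)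
qed

lemma equi2:
  assumes F: "\<And>n. in_Lp p (F n)" and C: "\<And>n. (\<integral>\<^sup>+t. ennreal (\<bar>F n t\<bar> powr p) \<partial>lborel) \<le> ennreal C"
    and C0: "C \<ge> 0" and e: "\<epsilon> > 0"
  shows "\<exists>\<delta>>0. \<forall>y. \<bar>y - x\<bar> < \<delta> \<longrightarrow> (\<forall>k. \<bar>green_op u v (F k) y - green_op u v (F k) x\<bar> < \<epsilon>)"
proof -
  define N where "N = \<bar>x\<bar> + 1"
  define K0 where "K0 = 2 powr p * (v N + u (-N)) * (C + 1)"
  have "v N + u (-N) > 0" "C + 1 > 0" using upos[of "-N"] vpos[of N] C0 by auto
  then have K0: "K0 > 0" unfolding K0_def by simp
  define e where "e = \<epsilon> powr p / (2 * K0)"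
  have e0: "e > 0" unfolding e_def using K0 e by simp
  obtain d1 where d1: "d1 > 0" "\<And>y. dist y x < d1 \<Longrightarrow> dist (u y) (u x) < e"
    using isCont_u[of x] e0 unfolding continuous_at_eps_delta by blast
  obtain d2 where d2: "d2 > 0" "\<And>y. dist y x < d2 \<Longrightarrow> dist (v y) (v x) < e"
    using isCont_v[of x] e0 unfolding continuous_at_eps_delta by blast
  define \<delta> where "\<delta> = min 1 (min d1 d2)"
  have "\<delta> > 0" unfolding \<delta>_def using d1 d2 by simp
  moreover have "\<bar>green_op u v (F k) y - green_op u v (F k) x\<bar> < \<epsilon>" if y: "\<bar>y - x\<bar> < \<delta>" for y k
  proof -
    have xy: "x \<in> {-N..N}" "y \<in> {-N..N}" using y unfolding N_def \<delta>_def by auto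
    have uu: "\<bar>u x - u y\<bar> < e" using d1(2)[of y] y unfolding \<delta>_def by (simp add: dist_real_def abs_minus_commute)
    have vv: "\<bar>v x - v y\<bar> < e" using d2(2)[of y] y unfolding \<delta>_def by (simp add: dist_real_def abs_minus_commute)
    have "v N * \<bar>u x - u y\<bar> + u (-N) * \<bar>v x - v y\<bar> \<le> v N * e + u (-N) * e"
      using uu vv by (intro add_mono mult_left_mono) auto
    also have "\<dots> = (v N + u (-N)) * e" by (simp add: algebra_simps)
    finally have w: "v N * \<bar>u x - u y\<bar> + u (-N) * \<bar>v x - v y\<bar> \<le> (v N + u (-N)) * e" .
    have "\<bar>green_op u v (F k) y - green_op u v (F k) x\<bar> powr p \<le> 2 powr p * ((v N * \<bar>u x - u y\<bar> + u (-N) * \<bar>v x - v y\<bar>) * C)"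
      by (rule equi[OF F C C0 xy])
    also have "\<dots> \<le> 2 powr p * (((v N + u (-N)) * e) * (C + 1))"
      using w C0 e0 by (intro mult_left_mono mult_mono) auto
    also have "\<dots> = K0 * e" unfolding K0_def by (simp add: algebra_simps)
    also have "\<dots> = \<epsilon> powr p / 2" unfolding e_def using K0 by simp
    also have "\<dots> < \<epsilon> powr p" using e by simp
    finally have lt: "\<bar>green_op u v (F k) y - green_op u v (F k) x\<bar> powr p < \<epsilon> powr p" .
    show ?thesis
    proof (rule ccontr)
      assume "\<not> ?thesis"
      then have "\<epsilon> powr p \<le> \<bar>green_op u v (F k) y - green_op u v (F k) x\<bar> powr p"
        using e p1 by (intro powr_mono2) auto
      then show False using lt by simp
    qed
  qed
  ultimately show ?thesis by blast
qed

lemma fatou_set: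
  fixes h :: "nat \<Rightarrow> real \<Rightarrow> real"
  assumes hm[measurable]: "\<And>k. h k \<in> borel_measurable lborel" and S[measurable]: "S \<in> sets lborel"
    and lim: "\<And>x. (\<lambda>k. h k x) \<longlonglongrightarrow> g x"
    and b: "\<And>k. (\<integral>\<^sup>+x. ennreal (\<bar>h k x\<bar> powr p) * indicator S x \<partial>lborel) \<le> ennreal \<eta>"
  shows "(\<integral>\<^sup>+x. ennreal (\<bar>g x\<bar> powr p) * indicator S x \<partial>lborel) \<le> ennreal \<eta>"
proof -
  have l2: "(\<lambda>k. ennreal (\<bar>h k x\<bar> powr p) * indicator S x) \<longlonglongrightarrow> ennreal (\<bar>g x\<bar> powr p) * indicator S x" for x
  proof (cases "x \<in> S")
    case True
    have "(\<lambda>k. \<bar>h k x\<bar> powr p) \<longlonglongrightarrow> \<bar>g x\<bar> powr p"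
      using p1 by (intro tendsto_powr' tendsto_rabs lim) auto
    then show ?thesis using True by (simp add: tendsto_ennrealI)
  qed simp
  have "(\<integral>\<^sup>+x. ennreal (\<bar>g x\<bar> powr p) * indicator S x \<partial>lborel) = (\<integral>\<^sup>+x. liminf (\<lambda>k. ennreal (\<bar>h k x\<bar> powr p) * indicator S x) \<partial>lborel)"
    by (intro nn_integral_cong) (simp add: lim_imp_Liminf[OF _ l2])
  also have "\<dots> \<le> liminf (\<lambda>k. \<integral>\<^sup>+x. ennreal (\<bar>h k x\<bar> powr p) * indicator S x \<partial>lborel)"
    by (intro nn_integral_liminf) measurable
  also have "\<dots> \<le> limsup (\<lambda>k. \<integral>\<^sup>+x. ennreal (\<bar>h k x\<bar> powr p) * indicator S x \<partial>lborel)"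
    by (intro Liminf_le_Limsup) simp
  also have "\<dots> \<le> ennreal \<eta>" by (intro Limsup_bounded always_eventually allI b)
  finally show ?thesis .
qed

lemma compact_part:
  fixes B :: real and F :: "nat \<Rightarrow> real \<Rightarrow> real"
  assumes F: "\<And>n. in_Lp p (F n)" and Bb: "\<And>n. Lp_norm p (F n) \<le> B"
  shows "\<exists>r g. strict_mono r \<and> in_Lp p g \<and> (\<lambda>n. Lp_norm p (\<lambda>x. green_op u v (F (r n)) x - g x)) \<longlonglongrightarrow> 0"
proof -
  have p0: "p > 0" using p1 by simp
  have B0: "B \<ge> 0" using Bb[of 0] unfolding Lp_norm_def by (meson order.trans powr_ge_zero)
  define C where "C = B powr p"
  have C0: "C \<ge> 0" unfolding C_def by simp
  have FC: "(\<integral>\<^sup>+t. ennreal (\<bar>F n t\<bar> powr p) \<partial>lborel) \<le> ennreal C" for n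
  proof -
    define I where "I = (LINT t|lborel. \<bar>F n t\<bar> powr p)"
    have I0: "I \<ge> 0" unfolding I_def by (intro integral_nonneg_AE) auto
    have "I = (I powr (1 / p)) powr p" using I0 p0 by (simp add: powr_powr)
    also have "\<dots> \<le> B powr p" using Bb[of n] p0 unfolding Lp_norm_def I_def[symmetric]
      by (intro powr_mono2) auto
    finally have "I \<le> C" unfolding C_def .
    then show ?thesis unfolding Lp_nn[OF F] I_def[symmetric] by (intro ennreal_leI)
  qed
  define H where "H n = green_op u v (F n)" for n
  have Hm[measurable]: "H n \<in> borel_measurable lborel" for n unfolding H_def using F by measurable
  have Hb: "\<bar>H n x\<bar> \<le> (u x * v x * C) powr (1 / p)" for n x
    unfolding H_def by (intro powr_root_bound p0 Hbound F FC C0) auto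
  obtain s where s: "strict_mono s" "\<forall>x\<in>\<rat>. convergent (\<lambda>k. H (s k) x)"
    using diag_conv[of H, OF Hb] by blast
  have conv: "convergent (\<lambda>k. H (s k) x)" for x
  proof (rule conv_all[OF s(2)])
    fix \<epsilon> :: real assume "\<epsilon> > 0"
    from equi2[OF F FC C0 this, of x]
    show "\<exists>\<delta>>0. \<forall>y. \<bar>y - x\<bar> < \<delta> \<longrightarrow> (\<forall>k. \<bar>H (s k) y - H (s k) x\<bar> < \<epsilon>)"
      unfolding H_def by blast
  qed
  define g where "g x = lim (\<lambda>k. H (s k) x)" for x
  have gl: "(\<lambda>k. H (s k) x) \<longlonglongrightarrow> g x" for x
    using conv[of x] unfolding g_def by (simp add: convergent_LIMSEQ_iff)
  have gm[measurable]: "g \<in> borel_measurable lborel"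
    by (rule borel_measurable_LIMSEQ_real[OF gl]) simp
  have gb: "\<bar>g x\<bar> powr p \<le> u x * v x * C" for x
  proof -
    have "\<bar>g x\<bar> \<le> (u x * v x * C) powr (1 / p)"
      by (rule tendsto_le[OF _ tendsto_const tendsto_rabs[OF gl]]) (use Hb in auto)
    then have "\<bar>g x\<bar> powr p \<le> ((u x * v x * C) powr (1 / p)) powr p" using p0 by (intro powr_mono2) auto
    also have "\<dots> = u x * v x * C" using p0 C0 by (simp add: powr_powr)
    finally show ?thesis .
  qed
  have HS: "(\<integral>\<^sup>+x. ennreal (\<bar>H k x\<bar> powr p) * indicator S x \<partial>lborel) \<le> ennreal (\<eta> * C)"
    if S[measurable]: "S \<in> sets lborel" and \<eta>0: "\<eta> \<ge> 0"
      and eta: "\<And>t. (\<integral>\<^sup>+x. ennreal (green u v x t) * indicator S x \<partial>lborel) \<le> ennreal \<eta>" for S \<eta> k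
  proof -
    have "(\<integral>\<^sup>+x. ennreal (\<bar>H k x\<bar> powr p) * indicator S x \<partial>lborel) \<le> ennreal \<eta> * (\<integral>\<^sup>+t. ennreal (\<bar>F k t\<bar> powr p) \<partial>lborel)"
      unfolding H_def by (rule set_bound[OF F S eta])
    also have "\<dots> \<le> ennreal \<eta> * ennreal C" by (intro mult_left_mono FC) auto
    also have "\<dots> = ennreal (\<eta> * C)" using \<eta>0 C0 by (subst ennreal_mult) auto
    finally show ?thesis .
  qed
  have gLp: "in_Lp p g"
    unfolding in_Lp_def
  proof
    show "g \<in> borel_measurable lborel" by simp
    have hu: "(\<integral>\<^sup>+x. ennreal (\<bar>H (s k) x\<bar> powr p) * indicator UNIV x \<partial>lborel) \<le> ennreal (1 * C)" for k
      by (rule HS[OF _ _ G_col1]) auto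
    have "(\<integral>\<^sup>+x. ennreal (\<bar>g x\<bar> powr p) * indicator UNIV x \<partial>lborel) \<le> ennreal (1 * C)"
      by (rule fatou_set[where h="\<lambda>k. H (s k)", OF _ _ gl hu]) auto
    then have "(\<integral>\<^sup>+x. ennreal (norm (\<bar>g x\<bar> powr p)) \<partial>lborel) < \<infinity>"
      by (simp add: order.strict_trans1)
    then show "integrable lborel (\<lambda>x. \<bar>g x\<bar> powr p)" by (intro integrableI_bounded) auto
  qed
  have main: "(\<lambda>k. LINT x|lborel. \<bar>H (s k) x - g x\<bar> powr p) \<longlonglongrightarrow> 0"
  proof (rule LIMSEQ_I)
    fix \<epsilon> :: real assume e: "0 < \<epsilon>"
    define \<eta> where "\<eta> = \<epsilon> / (4 * 2 powr p * (C + 1))"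
    have \<eta>0: "\<eta> > 0" unfolding \<eta>_def using e C0 by (intro divide_pos_pos mult_pos_pos) auto
    obtain N where N0: "N \<ge> 0" and N: "\<And>t. (\<integral>\<^sup>+x. ennreal (green u v x t) * indicator {x. N < \<bar>x\<bar>} x \<partial>lborel) \<le> ennreal \<eta>"
      using tail[OF \<eta>0] by blast
    define Ou where "Ou = {x::real. N < \<bar>x\<bar>}"
    have Ou[measurable]: "Ou \<in> sets lborel" unfolding Ou_def by measurable
    have HO: "(\<integral>\<^sup>+x. ennreal (\<bar>H (s k) x\<bar> powr p) * indicator Ou x \<partial>lborel) \<le> ennreal (\<eta> * C)" for k
      unfolding Ou_def using \<eta>0 by (intro HS N) auto
    have gO: "(\<integral>\<^sup>+x. ennreal (\<bar>g x\<bar> powr p) * indicator Ou x \<partial>lborel) \<le> ennreal (\<eta> * C)"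
      by (rule fatou_set[where h="\<lambda>k. H (s k)", OF _ Ou gl HO]) auto
    have DO: "(\<integral>\<^sup>+x. ennreal (\<bar>H (s k) x - g x\<bar> powr p) * indicator Ou x \<partial>lborel) \<le> ennreal (\<epsilon> / 2)" for k
    proof -
      have "(\<integral>\<^sup>+x. ennreal (\<bar>H (s k) x - g x\<bar> powr p) * indicator Ou x \<partial>lborel) \<le>
         (\<integral>\<^sup>+x. ennreal (2 powr p) * (ennreal (\<bar>H (s k) x\<bar> powr p) * indicator Ou x + ennreal (\<bar>g x\<bar> powr p) * indicator Ou x) \<partial>lborel)"
      proof (intro nn_integral_mono)
        fix x
        have "ennreal (\<bar>H (s k) x - g x\<bar> powr p) \<le> ennreal (2 powr p * (\<bar>H (s k) x\<bar> powr p + \<bar>g x\<bar> powr p))"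
          by (intro ennreal_leI powr_diff_bound p1)
        also have "\<dots> = ennreal (2 powr p) * (ennreal (\<bar>H (s k) x\<bar> powr p) + ennreal (\<bar>g x\<bar> powr p))"
          by (simp add: ennreal_mult ennreal_plus)
        finally show "ennreal (\<bar>H (s k) x - g x\<bar> powr p) * indicator Ou x \<le>
          ennreal (2 powr p) * (ennreal (\<bar>H (s k) x\<bar> powr p) * indicator Ou x + ennreal (\<bar>g x\<bar> powr p) * indicator Ou x)"
          by (auto split: split_indicator)
      qed
      also have "\<dots> = ennreal (2 powr p) * ((\<integral>\<^sup>+x. ennreal (\<bar>H (s k) x\<bar> powr p) * indicator Ou x \<partial>lborel) + (\<integral>\<^sup>+x. ennreal (\<bar>g x\<bar> powr p) * indicator Ou x \<partial>lborel))"
        by (subst nn_integral_cmult, measurable, subst nn_integral_add) auto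
      also have "\<dots> \<le> ennreal (2 powr p) * (ennreal (\<eta> * C) + ennreal (\<eta> * C))"
        by (intro mult_left_mono add_mono HO gO) auto
      also have "\<dots> = ennreal (2 powr p * (2 * \<eta> * C))"
      proof -
        have e1: "ennreal (\<eta> * C) + ennreal (\<eta> * C) = ennreal (2 * \<eta> * C)"
          using \<eta>0 C0 by (subst ennreal_plus[symmetric]) (auto simp: algebra_simps)
        have e2: "ennreal (2 powr p) * ennreal (2 * \<eta> * C) = ennreal (2 powr p * (2 * \<eta> * C))"
          by (rule ennreal_mult[symmetric]) (use \<eta>0 C0 in auto)
        show ?thesis by (simp only: e1 e2)
      qed
      also have "\<dots> \<le> ennreal (\<epsilon> / 2)"
      proof (intro ennreal_leI)
        have pp: "2 powr p > 0" "C + 1 > 0" using C0 by auto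
        have eqe: "\<eta> * (4 * 2 powr p * (C + 1)) = \<epsilon>" unfolding \<eta>_def using pp by simp
        have X0: "2 powr p * \<eta> \<ge> 0" using \<eta>0 by simp
        have "\<epsilon> = 4 * (2 powr p * \<eta>) * C + 4 * (2 powr p * \<eta>)" using eqe by (simp add: algebra_simps)
        moreover have "2 powr p * (2 * \<eta> * C) = 2 * (2 powr p * \<eta>) * C" by (simp add: algebra_simps)
        ultimately show "2 powr p * (2 * \<eta> * C) \<le> \<epsilon> / 2" using X0 by linarith
      qed
      finally show ?thesis .
    qed
    define D where "D = 2 powr p * (2 * (u (-N) * v N * C))"
    have Din: "(\<lambda>k. \<integral>\<^sup>+x. ennreal (\<bar>H (s k) x - g x\<bar> powr p * indicator {-N..N} x) \<partial>lborel) \<longlonglongrightarrow> (\<integral>\<^sup>+(x::real). 0 \<partial>lborel)"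
    proof (rule nn_integral_dominated_convergence[where w="\<lambda>x. ennreal (D * indicator {-N..N} x)" and u'="\<lambda>x. 0"
        and u="\<lambda>k x. ennreal (\<bar>H (s k) x - g x\<bar> powr p * indicator {-N..N} x)"])
      show "(\<lambda>x. ennreal (D * indicator {-N..N} x)) \<in> borel_measurable lborel" by measurable
      show "(\<lambda>x. ennreal (\<bar>H (s k) x - g x\<bar> powr p * indicator {-N..N} x)) \<in> borel_measurable lborel" for k
        by measurable
      show "(\<lambda>x. 0) \<in> borel_measurable lborel" by simp
      show "AE x in lborel. ennreal (\<bar>H (s k) x - g x\<bar> powr p * indicator {-N..N} x) \<le> ennreal (D * indicator {-N..N} x)" for k
      proof (intro AE_I2)
        fix x
        show "ennreal (\<bar>H (s k) x - g x\<bar> powr p * indicator {-N..N} x) \<le> ennreal (D * indicator {-N..N} x)"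
        proof (cases "x \<in> {-N..N}")
          case True
          have uv: "u x * v x * C \<le> u (-N) * v N * C"
            using True u_anti[of "-N" x] v_mono[of x N] C0 by (intro mult_right_mono mult_mono) auto
          have "\<bar>H (s k) x - g x\<bar> powr p \<le> 2 powr p * (\<bar>H (s k) x\<bar> powr p + \<bar>g x\<bar> powr p)"
            by (rule powr_diff_bound[OF p1])
          also have "\<dots> \<le> 2 powr p * (u x * v x * C + u x * v x * C)"
            unfolding H_def by (intro mult_left_mono add_mono Hbound F FC C0 gb) auto
          also have "\<dots> \<le> D" unfolding D_def using uv by (intro mult_left_mono) (auto simp: mult.commute)
          finally show ?thesis using True by (intro ennreal_leI) auto
        qed simp
      qed
      show "(\<integral>\<^sup>+x. ennreal (D * indicator {-N..N} x) \<partial>lborel) < \<infinity>"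
      proof -
        have "(\<integral>\<^sup>+x. ennreal (D * indicator {-N..N} x) \<partial>lborel) = (\<integral>\<^sup>+x. ennreal D * indicator {-N..N} x \<partial>lborel)"
          by (intro nn_integral_cong) (auto split: split_indicator)
        also have "\<dots> = ennreal D * emeasure lborel {-N..N}" by (rule nn_integral_cmult_indicator) simp
        also have "\<dots> < \<infinity>" using N0 by (simp add: ennreal_mult_less_top)
        finally show ?thesis .
      qed
      show "AE x in lborel. (\<lambda>k. ennreal (\<bar>H (s k) x - g x\<bar> powr p * indicator {-N..N} x)) \<longlonglongrightarrow> 0"
      proof (intro AE_I2)
        fix x
        have "(\<lambda>k. H (s k) x - g x) \<longlonglongrightarrow> 0" using gl[of x] by (simp add: LIM_zero)
        then have "(\<lambda>k. \<bar>H (s k) x - g x\<bar> powr p) \<longlonglongrightarrow> 0"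
          using p0 by (intro tendsto_zero_powrI[where b=p]) (auto simp: tendsto_rabs_zero)
        then have "(\<lambda>k. \<bar>H (s k) x - g x\<bar> powr p * indicator {-N..N} x) \<longlonglongrightarrow> 0"
          by (auto intro: tendsto_mult_left_zero)
        then show "(\<lambda>k. ennreal (\<bar>H (s k) x - g x\<bar> powr p * indicator {-N..N} x)) \<longlonglongrightarrow> 0"
          by (metis ennreal_0 tendsto_ennrealI)
      qed
    qed
    then have "eventually (\<lambda>k. (\<integral>\<^sup>+x. ennreal (\<bar>H (s k) x - g x\<bar> powr p * indicator {-N..N} x) \<partial>lborel) < ennreal (\<epsilon> / 4)) sequentially"
      using e by (intro order_tendstoD(2)) auto
    then obtain k0 where k0: "\<And>k. k \<ge> k0 \<Longrightarrow> (\<integral>\<^sup>+x. ennreal (\<bar>H (s k) x - g x\<bar> powr p * indicator {-N..N} x) \<partial>lborel) < ennreal (\<epsilon> / 4)"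
      unfolding eventually_sequentially by blast
    have "\<bar>(LINT x|lborel. \<bar>H (s k) x - g x\<bar> powr p) - 0\<bar> < \<epsilon>" if k: "k \<ge> k0" for k
    proof -
      have "(\<integral>\<^sup>+x. ennreal (\<bar>H (s k) x - g x\<bar> powr p) \<partial>lborel) =
        (\<integral>\<^sup>+x. ennreal (\<bar>H (s k) x - g x\<bar> powr p * indicator {-N..N} x) + ennreal (\<bar>H (s k) x - g x\<bar> powr p) * indicator Ou x \<partial>lborel)"
        by (intro nn_integral_cong) (auto simp: Ou_def split: split_indicator)
      also have "\<dots> = (\<integral>\<^sup>+x. ennreal (\<bar>H (s k) x - g x\<bar> powr p * indicator {-N..N} x) \<partial>lborel) + (\<integral>\<^sup>+x. ennreal (\<bar>H (s k) x - g x\<bar> powr p) * indicator Ou x \<partial>lborel)"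
        by (rule nn_integral_add) measurable
      also have "\<dots> \<le> ennreal (\<epsilon> / 4) + ennreal (\<epsilon> / 2)"
        using k0[OF k] DO[of k] by (intro add_mono) (auto intro: less_imp_le)
      also have "\<dots> = ennreal (3 * \<epsilon> / 4)" using e by (subst ennreal_plus[symmetric]) auto
      finally have lt: "(\<integral>\<^sup>+x. ennreal (\<bar>H (s k) x - g x\<bar> powr p) \<partial>lborel) \<le> ennreal (3 * \<epsilon> / 4)" .
      have "(LINT x|lborel. \<bar>H (s k) x - g x\<bar> powr p) = enn2real (\<integral>\<^sup>+x. ennreal (\<bar>H (s k) x - g x\<bar> powr p) \<partial>lborel)"
        by (rule integral_eq_nn_integral) auto
      also have "\<dots> \<le> 3 * \<epsilon> / 4" using lt e by (intro enn2real_leI) auto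
      also have "\<dots> < \<epsilon>" using e by simp
      finally have "(LINT x|lborel. \<bar>H (s k) x - g x\<bar> powr p) < \<epsilon>" .
      moreover have "(LINT x|lborel. \<bar>H (s k) x - g x\<bar> powr p) \<ge> 0" by (intro integral_nonneg_AE) auto
      ultimately show ?thesis by simp
    qed
    then show "\<exists>no. \<forall>n\<ge>no. norm ((LINT x|lborel. \<bar>H (s n) x - g x\<bar> powr p) - 0) < \<epsilon>" by auto
  qed
  have "(\<lambda>n. Lp_norm p (\<lambda>x. green_op u v (F (s n)) x - g x)) \<longlonglongrightarrow> 0"
    unfolding Lp_norm_def H_def[symmetric]
    using p0 by (intro tendsto_zero_powrI[OF main tendsto_const]) (auto intro!: always_eventually integral_nonneg_AE)
  then show ?thesis using s(1) gLp by blast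
qed

end

theorem theorem5p1:
  fixes q u v :: "real \<Rightarrow> real" and p :: real
  assumes "admissible_potential q"
    and "PFSS q u v"
    and "p \<ge> 1"
    and "((\<lambda>x. LINT t|lborel. green u v x t) \<longlongrightarrow> 0) at_infinity"
  shows "compact_green_Lp p u v"
proof -
  interpret gctx q u v p using assms by unfold_locales
  show ?thesis
    unfolding compact_green_Lp_def
  proof (intro conjI allI impI)
    fix f x assume "in_Lp p f"
    then show "integrable lborel (\<lambda>t. green u v x t * f t)" by (rule intG)
  next
    fix f assume "in_Lp p f"
    then show "in_Lp p (green_op u v f)" by (rule Gop_Lp)
  next
    fix F :: "nat \<Rightarrow> real \<Rightarrow> real"
    assume h: "(\<forall>n. in_Lp p (F n)) \<and> (\<exists>B. \<forall>n. Lp_norm p (F n) \<le> B)"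
    then obtain B where "\<And>n. Lp_norm p (F n) \<le> B" by blast
    then show "\<exists>r g. strict_mono r \<and> in_Lp p g \<and> (\<lambda>n. Lp_norm p (\<lambda>x. green_op u v (F (r n)) x - g x)) \<longlonglongrightarrow> 0"
      using h by (intro compact_part) auto
  qed
qed

end
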